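(* Let $M$ be a system execution satisfying the Lazy Set axioms A0, A1, A2, let $\Rightarrow$ be the relation defined in the context, and suppose $X\Rightarrow Y\Rightarrow Z$. Then: (1) if $\mathrm{Add}(X)$, then $X<Z$, $\mathrm{Cnt}^1(Y)$ and $\mathrm{Rem}^1(Z)$; (2) if $\mathrm{Rem}(X)$, then $X<Z$; (3) if $\mathrm{Cnt}(X)$, then $\mathrm{Begin}(X)<\mathrm{End}(Z)$.
   Context: A system execution $M$ consists of: a set of events, partitioned into low-level events (actions) and high-level events; unary predicates $\mathrm{Add},\mathrm{Rem},\mathrm{Cnt}$ on events; a partial order $<$ on events in which every event has finitely many predecessors (and Lamport's finiteness property: for every event $x$ there is a finite set $E$ with $x<y$ for all events $y\notin E$); functions $\mathrm{Begin},\mathrm{End}$ from events to actions with $\mathrm{Begin}(e)=\mathrm{End}(e)=e$ for actions $e$; functions $\chi$ (events $\to\{0,1,f\}$), $\mathrm{val}$ (events $\to\mathbb N$), $\gamma$ (events $\to$ events). For events $X,Y$, $X<Y$ iff $\mathrm{End}(X)<\mathrm{Begin}(Y)$. Notation: $\mathrm{Add}^p(a)$ abbreviates $\mathrm{Add}(a)\wedge\chi(a)=p$, similarly $\mathrm{Rem}^p,\mathrm{Cnt}^p$; $\mathrm{Op}^p(a)$ abbreviates $(\mathrm{Add}(a)\vee\mathrm{Rem}(a)\vee\mathrm{Cnt}(a))\wedge\chi(a)=p$ for $p\in\{0,1\}$. A0: $\mathrm{Add},\mathrm{Rem},\mathrm{Cnt}$ pairwise disjoint; $\mathrm{Add},\mathrm{Rem}$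 events are actions, $\mathrm{Cnt}$ events are high-level; $\mathrm{Begin}(X),\mathrm{End}(X)$ are actions; for $\mathrm{Cnt}$ events $E$, $\mathrm{Begin}(E)<\mathrm{End}(E)$; $<$ restricted to actions is linear. A1: for every $A$ with $\mathrm{Op}^1(A)$: $\mathrm{Add}^0(\gamma(A))$, $\mathrm{val}(\gamma(A))=\mathrm{val}(A)$, $\gamma(A)<\mathrm{End}(A)$, and no $R$ has $\mathrm{Rem}^1(R)$, $\gamma(R)=\gamma(A)$, $\gamma(A)<R<A$. A2: if $\mathrm{Op}^0(B)$, $\mathrm{Add}^0(A)$, $A<B$, $\mathrm{val}(A)=\mathrm{val}(B)$, then some $R$ has $\mathrm{Rem}^1(R)$, $A=\gamma(R)$, $R<\mathrm{End}(B)$. The relation $\Rightarrow$ on events holds exactly in the following cases: (1) for every $\mathrm{Cnt}^1$ event $C$: $\gamma(C)\Rightarrow C$, and $C\Rightarrow R$ for every $R$ with $\mathrm{Rem}^1(R)$ and $\gamma(R)=\gamma(C)$; (2) $R\Rightarrow C$ whenever $\mathrm{Cnt}^0(C)$, $\mathrm{Rem}^1(R)$, $\mathrm{val}(R)=\mathrm{val}(C)$, not $C<R$, and $\gamma(R)<C$; (3) $C\Rightarrow A$ whenever $\mathrm{Cnt}^0(C)$, $\mathrm{Add}^0(A)$, $\mathrm{val}(C)=\mathrm{val}(A)$ and not $A<C$. *)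

theory Defs
  imports Main
begin

datatype chival = C0 | C1 | Cf

text \<open>A system execution over the event type 'e (all elements of 'e are events).
  isAction: low-level events (actions); the others are high-level events.\<close>
record 'e sysexec =
  isAction :: "'e \<Rightarrow> bool"
  isAdd :: "'e \<Rightarrow> bool"
  isRem :: "'e \<Rightarrow> bool"
  isCnt :: "'e \<Rightarrow> bool"
  prec :: "'e \<Rightarrow> 'e \<Rightarrow> bool"
  Begin :: "'e \<Rightarrow> 'e"
  End :: "'e \<Rightarrow> 'e"
  chi :: "'e \<Rightarrow> chival"
  val :: "'e \<Rightarrow> nat"
  gamma :: "'e \<Rightarrow> 'e"

definition system_execution :: "'e sysexec \<Rightarrow> bool" where
  "system_execution M \<longleftrightarrow>
     (\<forall>x. \<not> prec M x x) \<and>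
     (\<forall>x y z. prec M x y \<longrightarrow> prec M y z \<longrightarrow> prec M x z) \<and>
     (\<forall>x. finite {y. prec M y x}) \<and>
     (\<forall>x. \<exists>E. finite E \<and> (\<forall>y. y \<notin> E \<longrightarrow> prec M x y)) \<and>
     (\<forall>e. isAction M (Begin M e) \<and> isAction M (End M e)) \<and>
     (\<forall>e. isAction M e \<longrightarrow> Begin M e = e \<and> End M e = e) \<and>
     (\<forall>X Y. prec M X Y \<longleftrightarrow> prec M (End M X) (Begin M Y))"

definition AddP :: "'e sysexec \<Rightarrow> chival \<Rightarrow> 'e \<Rightarrow> bool" where
  "AddP M p a \<longleftrightarrow> isAdd M a \<and> chi M a = p"
definition RemP :: "'e sysexec \<Rightarrow> chival \<Rightarrow> 'e \<Rightarrow> bool" where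
  "RemP M p a \<longleftrightarrow> isRem M a \<and> chi M a = p"
definition CntP :: "'e sysexec \<Rightarrow> chival \<Rightarrow> 'e \<Rightarrow> bool" where
  "CntP M p a \<longleftrightarrow> isCnt M a \<and> chi M a = p"
definition OpP :: "'e sysexec \<Rightarrow> chival \<Rightarrow> 'e \<Rightarrow> bool" where
  "OpP M p a \<longleftrightarrow> (isAdd M a \<or> isRem M a \<or> isCnt M a) \<and> chi M a = p"

definition A0 :: "'e sysexec \<Rightarrow> bool" where
  "A0 M \<longleftrightarrow>
     (\<forall>e. \<not> (isAdd M e \<and> isRem M e) \<and> \<not> (isAdd M e \<and> isCnt M e) \<and> \<not> (isRem M e \<and> isCnt M e)) \<and>
     (\<forall>e. isAdd M e \<longrightarrow> isAction M e) \<and>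
     (\<forall>e. isRem M e \<longrightarrow> isAction M e) \<and>
     (\<forall>e. isCnt M e \<longrightarrow> \<not> isAction M e) \<and>
     (\<forall>X. isAction M (Begin M X) \<and> isAction M (End M X)) \<and>
     (\<forall>E. isCnt M E \<longrightarrow> prec M (Begin M E) (End M E)) \<and>
     (\<forall>a b. isAction M a \<longrightarrow> isAction M b \<longrightarrow> a = b \<or> prec M a b \<or> prec M b a)"

definition A1 :: "'e sysexec \<Rightarrow> bool" where
  "A1 M \<longleftrightarrow> (\<forall>A. OpP M C1 A \<longrightarrow>
     AddP M C0 (gamma M A) \<and> val M (gamma M A) = val M A \<and>
     prec M (gamma M A) (End M A) \<and>
     \<not> (\<exists>R. RemP M C1 R \<and> gamma M R = gamma M A \<and> prec M (gamma M A) R \<and> prec M R A))"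

definition A2 :: "'e sysexec \<Rightarrow> bool" where
  "A2 M \<longleftrightarrow> (\<forall>A B. OpP M C0 B \<longrightarrow> AddP M C0 A \<longrightarrow> prec M A B \<longrightarrow> val M A = val M B \<longrightarrow>
     (\<exists>R. RemP M C1 R \<and> A = gamma M R \<and> prec M R (End M B)))"

definition arrow :: "'e sysexec \<Rightarrow> 'e \<Rightarrow> 'e \<Rightarrow> bool" where
  "arrow M X Y \<longleftrightarrow>
     (CntP M C1 Y \<and> X = gamma M Y) \<or>
     (CntP M C1 X \<and> RemP M C1 Y \<and> gamma M Y = gamma M X) \<or>
     (CntP M C0 Y \<and> RemP M C1 X \<and> val M X = val M Y \<and> \<not> prec M Y X \<and> prec M (gamma M X) Y) \<or>
     (CntP M C0 X \<and> AddP M C0 Y \<and> val M X = val M Y \<and> \<not> prec M Y X)"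

end

theory Submission
  imports Defs
begin

theorem lemma3p7:
  fixes M :: "'e sysexec" and X Y Z :: 'e
  assumes "system_execution M" and "A0 M" and "A1 M" and "A2 M"
    and "arrow M X Y" and "arrow M Y Z"
  shows "(isAdd M X \<longrightarrow> prec M X Z \<and> CntP M C1 Y \<and> RemP M C1 Z)
       \<and> (isRem M X \<longrightarrow> prec M X Z)
       \<and> (isCnt M X \<longrightarrow> prec M (Begin M X) (End M Z))"
proof -
  have irr: "\<And>x. \<not> prec M x x" and tr: "\<And>x y z. prec M x y \<Longrightarrow> prec M y z \<Longrightarrow> prec M x z"
    and pe: "\<And>x y. prec M x y = prec M (End M x) (Begin M y)"
    and ab: "\<And>e. isAction M e \<Longrightarrow> Begin M e = e \<and> End M e = e"
    using assms(1) unfolding system_execution_def by blast+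
  have dis: "\<And>e. \<not> (isAdd M e \<and> isRem M e) \<and> \<not> (isAdd M e \<and> isCnt M e) \<and> \<not> (isRem M e \<and> isCnt M e)"
    and aa: "\<And>e. isAdd M e \<Longrightarrow> isAction M e" and ar: "\<And>e. isRem M e \<Longrightarrow> isAction M e"
    and actBE: "\<And>X. isAction M (Begin M X) \<and> isAction M (End M X)"
    and lin: "\<And>a b. isAction M a \<Longrightarrow> isAction M b \<Longrightarrow> a = b \<or> prec M a b \<or> prec M b a"
    and cbe: "\<And>E. isCnt M E \<Longrightarrow> prec M (Begin M E) (End M E)"
    using assms(2) unfolding A0_def by blast+
  have a1: "\<And>A. OpP M C1 A \<Longrightarrow> AddP M C0 (gamma M A) \<and> val M (gamma M A) = val M A \<and>
     prec M (gamma M A) (End M A) \<and>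
     \<not> (\<exists>R. RemP M C1 R \<and> gamma M R = gamma M A \<and> prec M (gamma M A) R \<and> prec M R A)"
    using assms(3) unfolding A1_def by blast
  have a2: "\<And>A B. OpP M C0 B \<Longrightarrow> AddP M C0 A \<Longrightarrow> prec M A B \<Longrightarrow> val M A = val M B \<Longrightarrow>
     (\<exists>R. RemP M C1 R \<and> A = gamma M R \<and> prec M R (End M B))"
    using assms(4) unfolding A2_def by blast
  have c1: "CntP M C1 Y \<Longrightarrow> AddP M C0 (gamma M Y)" for Y using a1[of Y] by (simp add: OpP_def CntP_def)
  show ?thesis
  proof (intro conjI impI)
    assume "isAdd M X"
    then have c: "CntP M C1 Y \<and> X = gamma M Y"
      using assms(5) dis unfolding arrow_def CntP_def RemP_def by blast
    then have "AddP M C0 Y \<Longrightarrow> False" using c1 unfolding CntP_def AddP_def using dis by blast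
    then have z: "RemP M C1 Z \<and> gamma M Z = X"
      using assms(6) c dis c1[of Z] unfolding arrow_def CntP_def RemP_def AddP_def by auto
    then have "prec M X (End M Z)" using a1[of Z] by (auto simp: OpP_def RemP_def)
    then show "prec M X Z" using z ab ar pe aa \<open>isAdd M X\<close> by (metis RemP_def)
    show "CntP M C1 Y" using c by simp
    show "RemP M C1 Z" using z by simp
  next
    assume "isRem M X"
    then have x: "CntP M C0 Y \<and> RemP M C1 X \<and> val M X = val M Y \<and> \<not> prec M Y X \<and> prec M (gamma M X) Y"
      using assms(5) dis c1[of Y] unfolding arrow_def CntP_def RemP_def AddP_def by auto
    then have z: "AddP M C0 Z \<and> val M Y = val M Z \<and> \<not> prec M Z Y"
      using assms(6) dis c1[of Z] unfolding arrow_def CntP_def RemP_def AddP_def by auto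
    show "prec M X Z"
    proof (rule ccontr)
      assume nxz: "\<not> prec M X Z"
      have xa: "isAction M X" using x ar RemP_def by metis
      have za: "isAction M Z" using z aa AddP_def by metis
      have "X \<noteq> Z" using x z dis unfolding AddP_def RemP_def by blast
      then have zx: "prec M Z X" using lin xa za nxz by blast
      have gx: "AddP M C0 (gamma M X)" "val M (gamma M X) = val M X"
        using a1[of X] x by (auto simp: OpP_def RemP_def)
      have ga: "isAction M (gamma M X)" using gx aa AddP_def by metis
      have "prec M (gamma M X) (Begin M Y)" using x pe ga ab by metis
      moreover have "\<not> prec M Z (Begin M Y)" using z pe za ab by metis
      then have "Z = Begin M Y \<or> prec M (Begin M Y) Z" using lin actBE za by blast
      ultimately have gz: "prec M (gamma M X) Z" using tr by blast
      obtain R where R: "RemP M C1 R" "gamma M X = gamma M R" "prec M R (End M Z)"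
        using a2[of Z "gamma M X"] gz gx x z by (auto simp: OpP_def AddP_def)
      have "prec M (gamma M R) (End M R)" using a1[of R] R by (auto simp: OpP_def RemP_def)
      then have "prec M (gamma M X) R" using R ar ab RemP_def by metis
      moreover have "prec M R X" using R zx za ab tr by metis
      ultimately show False using a1[of X] x R by (auto simp: OpP_def RemP_def)
    qed
  next
    assume "isCnt M X"
    then have "(CntP M C1 X \<and> RemP M C1 Y \<and> gamma M Y = gamma M X) \<or>
       (CntP M C0 X \<and> AddP M C0 Y \<and> val M X = val M Y \<and> \<not> prec M Y X)"
      using assms(5) dis c1[of Y] unfolding arrow_def CntP_def RemP_def AddP_def by auto
    then show "prec M (Begin M X) (End M Z)"
    proof
      assume x: "CntP M C1 X \<and> RemP M C1 Y \<and> gamma M Y = gamma M X"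
      then have z: "CntP M C0 Z \<and> val M Y = val M Z \<and> \<not> prec M Z Y \<and> prec M (gamma M Y) Z"
        using assms(6) dis c1[of Z] unfolding arrow_def CntP_def RemP_def AddP_def by auto
      show ?thesis
      proof (rule ccontr)
        assume n: "\<not> prec M (Begin M X) (End M Z)"
        then have ez: "End M Z = Begin M X \<or> prec M (End M Z) (Begin M X)" using lin actBE by blast
        have gy: "AddP M C0 (gamma M Y)" "val M (gamma M Y) = val M Y"
          using a1[of Y] x by (auto simp: OpP_def RemP_def)
        obtain R where R: "RemP M C1 R" "gamma M Y = gamma M R" "prec M R (End M Z)"
          using a2[of Z "gamma M Y"] gy x z by (auto simp: OpP_def AddP_def CntP_def)
        have "prec M (gamma M R) (End M R)" using a1[of R] R by (auto simp: OpP_def RemP_def)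
        then have "prec M (gamma M X) R" using R x ar ab RemP_def by metis
        moreover have "prec M R (Begin M X)" using R ez tr by metis
        then have "prec M R X" using pe R ar ab RemP_def by metis
        ultimately show False using a1[of X] x R by (auto simp: OpP_def CntP_def)
      qed
    next
      assume x: "CntP M C0 X \<and> AddP M C0 Y \<and> val M X = val M Y \<and> \<not> prec M Y X"
      then have z: "CntP M C1 Z \<and> Y = gamma M Z"
        using assms(6) dis unfolding arrow_def CntP_def RemP_def AddP_def by auto
      then have yz: "prec M Y (End M Z)" using a1[of Z] by (auto simp: OpP_def CntP_def)
      have ya: "isAction M Y" using x aa AddP_def by metis
      have "\<not> prec M Y (Begin M X)" using x pe ya ab by metis
      then have "Y = Begin M X \<or> prec M (Begin M X) Y" using lin actBE ya by blast
      then show ?thesis using yz tr by metis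
    qed
  qed
qed

end
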